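(* Let $G$ be a finite additive group of order $v$ and let $\mathcal{F}=\{B_1,B_2,\{0\}\}$ be a $(v,[k_1,k_2,1],\lambda)$ partitioned difference family in $G$ (with $|B_1|=k_1$, $|B_2|=k_2$). Then for $i=1,2$: (i) if $v-\lambda$ is odd, $B_i$ is a $\left(v,\frac{v-1}{2},\frac{v-3}{4}\right)$ difference set in $G$; (ii) if $v-\lambda$ is even, $B_i$ is a $(G,k_i,\alpha_i,\alpha_i+1)$ partial difference set with $\alpha_i=k_i+\frac{\lambda-v}{2}$.
   Context: Difference in $G$: $x-y:=x+(-y)$. For $B\subseteq G$, $\Delta B$ is the multiset $\{x-y: x,y\in B, x\neq y\}$; for $\mathcal{F}=\{B_1,\dots,B_t\}$, $\Delta\mathcal{F}$ is the multiset union of the $\Delta B_i$. A $(v,[k_1,\dots,k_t],\lambda)$ partitioned difference family in $G$ is a collection of subsets $B_1,\dots,B_t$ partitioning $G$ with $|B_i|=k_i$ such that $\Delta\mathcal{F}$ contains every non-zero element of $G$ exactly $\lambda$ times. A $k$-subset $B$ is a $(v,k,\mu)$ difference set if $\Delta B$ contains every non-zero element of $G$ exactly $\mu$ times. A $k$-subset $B$ of $G$ is a $(G,k,\alpha,\beta)$ (or $(v,k,\alpha,\beta)$) partial difference set if $\Delta B$ contains every non-zero element of $B$ exactly $\alpha$ times and every non-zero element of $G\setminus B$ exactly $\beta$ times. *)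

theory Defs
  imports Complex_Main
begin

text \<open>The group G is the (finite) type 'a itself; its order v is CARD('a).
  Multiplicity of g in the multiset Delta B = {x - y : x,y in B, x ~= y}.\<close>
definition diff_count :: "'a::ab_group_add set \<Rightarrow> 'a \<Rightarrow> nat" where
  "diff_count B g = card {(x, y). x \<in> B \<and> y \<in> B \<and> x \<noteq> y \<and> x - y = g}"

definition partitioned_difference_family :: "'a::{ab_group_add,finite} set list \<Rightarrow> nat \<Rightarrow> bool" where
  "partitioned_difference_family Bs lam \<longleftrightarrow>
     (\<forall>i<length Bs. Bs ! i \<noteq> {}) \<and>
     (\<forall>i<length Bs. \<forall>j<length Bs. i \<noteq> j \<longrightarrow> Bs ! i \<inter> Bs ! j = {}) \<and>
     \<Union> (set Bs) = UNIV \<and>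
     (\<forall>g. g \<noteq> 0 \<longrightarrow> (\<Sum>i<length Bs. diff_count (Bs ! i) g) = lam)"

text \<open>(v,k,mu) difference set in G (v = CARD('a)); parameters are real so that
  fractional expressions such as (v-1)/2 are stated exactly.\<close>
definition difference_set :: "'a::{ab_group_add,finite} set \<Rightarrow> real \<Rightarrow> real \<Rightarrow> bool" where
  "difference_set B k mu \<longleftrightarrow>
     real (card B) = k \<and> (\<forall>g. g \<noteq> 0 \<longrightarrow> real (diff_count B g) = mu)"

definition partial_difference_set :: "'a::{ab_group_add,finite} set \<Rightarrow> real \<Rightarrow> real \<Rightarrow> real \<Rightarrow> bool" where
  "partial_difference_set B k \<alpha> \<beta> \<longleftrightarrow>
     real (card B) = k \<and>
     (\<forall>g. g \<in> B \<and> g \<noteq> 0 \<longrightarrow> real (diff_count B g) = \<alpha>) \<and>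
     (\<forall>g. g \<notin> B \<and> g \<noteq> 0 \<longrightarrow> real (diff_count B g) = \<beta>)"

end

theory Submission imports Defs begin

lemma shift_sum:
  fixes f :: "'a::{ab_group_add,finite} \<Rightarrow> real"
  shows "(\<Sum>y\<in>UNIV. f (y + g)) = (\<Sum>y\<in>UNIV. f y)"
  by (rule sum.reindex_bij_witness[where i="\<lambda>y. y - g" and j="\<lambda>y. y + g"]) auto

lemma dc_sum:
  fixes B :: "'a::{ab_group_add,finite} set"
  assumes "g \<noteq> 0"
  shows "real (diff_count B g) = (\<Sum>y\<in>UNIV. of_bool (y\<in>B) * of_bool (y+g\<in>B))"
proof -
  have "{(x, y). x \<in> B \<and> y \<in> B \<and> x \<noteq> y \<and> x - y = g} = (\<lambda>y. (y+g, y)) ` {y. y\<in>B \<and> y+g\<in>B}"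
    using assms by (auto simp: image_iff algebra_simps)
  moreover have "inj (\<lambda>y::'a. (y+g, y))" by (auto intro: injI)
  ultimately have "diff_count B g = card {y. y\<in>B \<and> y+g\<in>B}"
    unfolding diff_count_def by (metis (no_types, lifting) card_image inj_on_subset subset_UNIV)
  moreover have "(\<Sum>y\<in>UNIV. of_bool (y\<in>B) * of_bool (y+g\<in>B)) = (\<Sum>y\<in>UNIV. (of_bool (y\<in>B \<and> y+g\<in>B)::real))"
    by (intro sum.cong) auto
  ultimately show ?thesis by (simp add: Collect_conj_eq)
qed

lemma card_sum:
  fixes B :: "'a::{ab_group_add,finite} set"
  shows "real (card B) = (\<Sum>y\<in>UNIV. of_bool (y\<in>B))"
  by simp

lemma dc_zero: fixes g :: "'a::ab_group_add" shows "diff_count {0} g = 0"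
proof -
  have "{(x, y). x \<in> {0::'a} \<and> y \<in> {0} \<and> x \<noteq> y \<and> x - y = g} = {}" by auto
  then show ?thesis unfolding diff_count_def by (metis card.empty)
qed

lemma total_sum:
  fixes B :: "'a::{ab_group_add,finite} set"
  shows "(\<Sum>g\<in>UNIV - {0}. real (diff_count B g)) = real (card B) * real (card B) - real (card B)"
proof -
  let ?S = "\<lambda>g. (\<Sum>y\<in>UNIV. of_bool (y\<in>B) * (of_bool (y+g\<in>B)::real))"
  have "(\<Sum>g\<in>UNIV - {0}. real (diff_count B g)) = (\<Sum>g\<in>UNIV - {0}. ?S g)"
    by (intro sum.cong) (auto simp: dc_sum simp del: sum_mult_of_bool_eq sum_of_bool_mult_eq)
  also have "\<dots> = (\<Sum>g\<in>UNIV. ?S g) - ?S 0"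
    by (simp add: sum_diff1 del: sum_mult_of_bool_eq sum_of_bool_mult_eq)
  also have "(\<Sum>g\<in>UNIV. ?S g) = (\<Sum>y\<in>UNIV. of_bool (y\<in>B) * (\<Sum>g\<in>UNIV. of_bool (y+g\<in>B)))"
    by (simp only: sum_distrib_left) (rule sum.swap)
  also have "\<dots> = (\<Sum>y\<in>UNIV. of_bool (y\<in>B) * real (card B))"
  proof (intro sum.cong refl)
    fix y :: 'a
    have "(\<Sum>g\<in>UNIV. (of_bool (y+g\<in>B)::real)) = (\<Sum>g\<in>UNIV. of_bool (g + y\<in>B))" by (simp add: add.commute)
    also have "\<dots> = (\<Sum>g\<in>UNIV. of_bool (g\<in>B))" by (rule shift_sum[where f="\<lambda>g. of_bool (g\<in>B)"])
    finally show "of_bool (y\<in>B) * (\<Sum>g\<in>UNIV. (of_bool (y+g\<in>B)::real)) = of_bool (y\<in>B) * real (card B)"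
      by simp
  qed
  also have "\<dots> = real (card B) * real (card B)" by simp
  also have "?S 0 = real (card B)" by simp
  finally show ?thesis .
qed

lemma dC_formula:
  fixes B C :: "'a::{ab_group_add,finite} set"
  assumes BC: "B \<inter> C = {}" and B0: "0 \<notin> B" and C0: "0 \<notin> C" and U: "B \<union> C \<union> {0} = UNIV"
    and g: "g \<noteq> 0"
  shows "real (diff_count C g) = real (card (UNIV::'a set)) - 2 - 2 * real (card B) + real (diff_count B g)
           + of_bool (g \<in> B) + of_bool (-g \<in> B)"
proof -
  let ?b = "\<lambda>y. (of_bool (y \<in> B) :: real)"
  let ?z = "\<lambda>y::'a. (of_bool (y = 0) :: real)"
  have e: "(of_bool (y \<in> C) :: real) = 1 - ?b y - ?z y" for y
    using BC B0 C0 U by (cases "y \<in> C"; cases "y \<in> B"; cases "y = 0"; auto)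
  have "real (diff_count C g) = (\<Sum>y\<in>UNIV. (1 - ?b y - ?z y) * (1 - ?b (y+g) - ?z (y+g)))"
    by (simp only: dc_sum[OF g] e)
  also have "\<dots> = (\<Sum>y\<in>(UNIV::'a set). 1) - (\<Sum>y\<in>UNIV. ?b (y+g)) - (\<Sum>y\<in>UNIV. ?z (y+g)) - (\<Sum>y\<in>UNIV. ?b y)
     + (\<Sum>y\<in>UNIV. ?b y * ?b (y+g)) + (\<Sum>y\<in>UNIV. ?b y * ?z (y+g)) - (\<Sum>y\<in>UNIV. ?z y)
     + (\<Sum>y\<in>UNIV. ?z y * ?b (y+g)) + (\<Sum>y\<in>UNIV. ?z y * ?z (y+g))"
  proof -
    have x: "(1 - a - b) * (1 - c - d) = 1 - c - d - a + a*c + a*d - b + b*c + b*d" for a b c d :: real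
      by algebra
    show ?thesis by (simp only: x sum.distrib sum_subtractf)
  qed
  also have "(\<Sum>y\<in>(UNIV::'a set). 1) = real (card (UNIV::'a set))" by simp
  also have "(\<Sum>y\<in>UNIV. ?b (y+g)) = real (card B)"
    using shift_sum[where f="?b" and g=g] by simp
  also have "(\<Sum>y\<in>UNIV. ?z (y+g)) = 1"
    using shift_sum[where f="?z" and g=g] by simp
  also have "(\<Sum>y\<in>UNIV. ?b y) = real (card B)" by simp
  also have "(\<Sum>y\<in>UNIV. ?b y * ?b (y+g)) = real (diff_count B g)"
    by (simp only: dc_sum[OF g])
  also have "(\<Sum>y\<in>UNIV. ?b y * ?z (y+g)) = ?b (-g)"
  proof -
    have "(\<Sum>y\<in>UNIV. ?b y * ?z (y+g)) = (\<Sum>y\<in>UNIV. if y = -g then ?b (-g) else 0)"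
    proof (intro sum.cong refl)
      fix y :: 'a
      have yy: "(y + g = 0) = (y = -g)" by (simp add: eq_neg_iff_add_eq_0)
      show "?b y * ?z (y+g) = (if y = -g then ?b (-g) else 0)" by (simp only: yy) simp
    qed
    then show ?thesis by simp
  qed
  also have "(\<Sum>y\<in>UNIV. ?z y) = 1" by simp
  also have "(\<Sum>y\<in>UNIV. ?z y * ?b (y+g)) = ?b g"
  proof -
    have "(\<Sum>y\<in>UNIV. ?z y * ?b (y+g)) = (\<Sum>y\<in>(UNIV::'a set). if y = 0 then ?b g else 0)"
      by (rule sum.cong[OF refl]) simp
    then show ?thesis by simp
  qed
  also have "(\<Sum>y\<in>UNIV. ?z y * ?z (y+g)) = 0"
    using g by (intro sum.neutral) auto
  finally show ?thesis by linarith
qed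

lemma main_part:
  fixes B C :: "'a::{ab_group_add,finite} set" and lam :: nat
  assumes BC: "B \<inter> C = {}" and B0: "0 \<notin> B" and C0: "0 \<notin> C" and U: "B \<union> C \<union> {0} = UNIV"
    and ne: "B \<noteq> {}"
    and lam: "\<forall>g. g \<noteq> 0 \<longrightarrow> diff_count B g + diff_count C g = lam"
  shows "(odd (int (card (UNIV :: 'a set)) - int lam) \<longrightarrow>
              difference_set B ((real (card (UNIV :: 'a set)) - 1) / 2) ((real (card (UNIV :: 'a set)) - 3) / 4)) \<and>
           (even (int (card (UNIV :: 'a set)) - int lam) \<longrightarrow>
              partial_difference_set B (real (card B))
                 (real (card B) + (real lam - real (card (UNIV :: 'a set))) / 2)
                 (real (card B) + (real lam - real (card (UNIV :: 'a set))) / 2 + 1))"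
proof -
  define v where "v = card (UNIV :: 'a set)"
  define k where "k = card B"
  have F: "real lam = 2 * real (diff_count B g) + real v - 2 - 2 * real k + of_bool (g \<in> B) + of_bool (-g \<in> B)"
    if g: "g \<noteq> 0" for g
  proof -
    have "real lam = real (diff_count B g) + real (diff_count C g)"
      using lam g by (metis of_nat_add)
    then show ?thesis using dC_formula[OF BC B0 C0 U g] unfolding v_def k_def by linarith
  qed
  have Fi: "int lam = 2 * int (diff_count B g) + int v - 2 - 2 * int k + of_bool (g \<in> B) + of_bool (-g \<in> B)"
    if g: "g \<noteq> 0" for g
  proof -
    have "real_of_int (int lam) = real_of_int (2 * int (diff_count B g) + int v - 2 - 2 * int k + of_bool (g \<in> B) + of_bool (-g \<in> B))"
      using F[OF g] by simp
    then show ?thesis by (simp only: of_int_eq_iff)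
  qed
  show ?thesis
  proof (intro conjI impI)
    assume ev: "even (int (card (UNIV :: 'a set)) - int lam)"
    have sym: "g \<in> B \<longleftrightarrow> -g \<in> B" if g: "g \<noteq> 0" for g
      using Fi[OF g] ev unfolding v_def[symmetric]
      by (cases "g \<in> B"; cases "-g \<in> B"; simp; presburger)
    show "partial_difference_set B (real (card B))
                 (real (card B) + (real lam - real (card (UNIV :: 'a set))) / 2)
                 (real (card B) + (real lam - real (card (UNIV :: 'a set))) / 2 + 1)"
      unfolding partial_difference_set_def
    proof (intro conjI allI impI refl)
      fix g assume a: "g \<in> B \<and> g \<noteq> 0"
      then have "-g \<in> B" using sym by auto
      with a F[of g] have "real lam = 2 * real (diff_count B g) + real v - 2 - 2 * real k + 1 + 1" by simp
      then show "real (diff_count B g) = real (card B) + (real lam - real (card (UNIV :: 'a set))) / 2"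
        unfolding v_def k_def by (simp add: field_simps)
    next
      fix g assume a: "g \<notin> B \<and> g \<noteq> 0"
      then have "-g \<notin> B" using sym by auto
      with a F[of g] have "real lam = 2 * real (diff_count B g) + real v - 2 - 2 * real k" by simp
      then show "real (diff_count B g) = real (card B) + (real lam - real (card (UNIV :: 'a set))) / 2 + 1"
        unfolding v_def k_def by (simp add: field_simps)
    qed
  next
    assume od: "odd (int (card (UNIV :: 'a set)) - int lam)"
    have asym: "g \<in> B \<longleftrightarrow> -g \<notin> B" if g: "g \<noteq> 0" for g
      using Fi[OF g] od unfolding v_def[symmetric]
      by (cases "g \<in> B"; cases "-g \<in> B"; simp; presburger)
    have Cimg: "C = uminus ` B"
    proof (intro set_eqI iffI)
      fix x assume "x \<in> C"
      then have "x \<noteq> 0" "x \<notin> B" using C0 BC by auto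
      then have "-x \<in> B" using asym[of x] by auto
      then show "x \<in> uminus ` B" by (metis image_eqI minus_minus)
    next
      fix x assume "x \<in> uminus ` B"
      then obtain y where y: "y \<in> B" "x = -y" by auto
      then have "y \<noteq> 0" using B0 by auto
      then have "x \<notin> B" "x \<noteq> 0" using asym[of y] y by auto
      then show "x \<in> C" using U by auto
    qed
    have cC: "card C = k" unfolding Cimg k_def by (rule card_image) (auto intro: inj_onI)
    have "v = card (B \<union> C \<union> {0})" using U v_def by simp
    also have "\<dots> = card B + card C + 1"
      using BC B0 C0 by (simp add: card_Un_disjoint)
    finally have vk: "v = 2 * k + 1" using cC k_def by simp
    have kpos: "k > 0" using ne k_def by (simp add: card_gt_0_iff)
    define m where "m = (real lam - real v + 1) / 2 + real k"
    have dm: "real (diff_count B g) = m" if g: "g \<noteq> 0" for g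
    proof (cases "g \<in> B")
      case True
      then have "-g \<notin> B" using asym[OF g] by auto
      with True F[OF g] have "real lam = 2 * real (diff_count B g) + real v - 2 - 2 * real k + 1" by simp
      then show ?thesis unfolding m_def by (simp add: field_simps)
    next
      case False
      then have "-g \<in> B" using asym[OF g] by auto
      with False F[OF g] have "real lam = 2 * real (diff_count B g) + real v - 2 - 2 * real k + 1" by simp
      then show ?thesis unfolding m_def by (simp add: field_simps)
    qed
    have "(\<Sum>g\<in>UNIV - {0}. real (diff_count B g)) = (\<Sum>g\<in>(UNIV::'a set) - {0}. m)"
      by (intro sum.cong) (auto simp: dm)
    also have "\<dots> = real (v - 1) * m" by (simp add: v_def card_Diff_singleton)
    finally have "real (v - 1) * m = real k * real k - real k"
      using total_sum[of B] k_def by simp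
    then have "real (2 * k) * m = real k * (real k - 1)" using vk by (simp add: algebra_simps)
    then have "real k * (2 * m) = real k * (real k - 1)" by (simp add: algebra_simps)
    then have m2: "2 * m = real k - 1" using kpos by simp
    show "difference_set B ((real (card (UNIV :: 'a set)) - 1) / 2) ((real (card (UNIV :: 'a set)) - 3) / 4)"
      unfolding difference_set_def
    proof (intro conjI allI impI)
      show "real (card B) = (real (card (UNIV :: 'a set)) - 1) / 2"
        using vk unfolding v_def k_def by simp
      fix g :: 'a assume "g \<noteq> 0"
      then show "real (diff_count B g) = (real (card (UNIV :: 'a set)) - 3) / 4"
        using dm m2 vk unfolding v_def[symmetric] by simp
    qed
  qed
qed

theorem proposition4p2:
  fixes B1 B2 :: "'a::{ab_group_add,finite} set" and lam :: nat
  assumes "partitioned_difference_family [B1, B2, {0}] lam"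
  shows "\<forall>B \<in> {B1, B2}.
           (odd (int (card (UNIV :: 'a set)) - int lam) \<longrightarrow>
              difference_set B ((real (card (UNIV :: 'a set)) - 1) / 2) ((real (card (UNIV :: 'a set)) - 3) / 4)) \<and>
           (even (int (card (UNIV :: 'a set)) - int lam) \<longrightarrow>
              partial_difference_set B (real (card B))
                 (real (card B) + (real lam - real (card (UNIV :: 'a set))) / 2)
                 (real (card B) + (real lam - real (card (UNIV :: 'a set))) / 2 + 1))"
proof -
  note d = assms[unfolded partitioned_difference_family_def]
  have ne1: "B1 \<noteq> {}" using d by (metis length_Cons list.size(3) nth_Cons_0 zero_less_Suc)
  have ne2: "B2 \<noteq> {}" using d[THEN conjunct1, rule_format, of 1] by simp
  have dj12: "B1 \<inter> B2 = {}" using d[THEN conjunct2, THEN conjunct1, rule_format, of 0 1] by simp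
  have dj13: "0 \<notin> B1" using d[THEN conjunct2, THEN conjunct1, rule_format, of 0 2] by simp
  have dj23: "0 \<notin> B2" using d[THEN conjunct2, THEN conjunct1, rule_format, of 1 2] by simp
  have U: "B1 \<union> B2 \<union> {0} = UNIV" using d by auto
  have S: "\<forall>g. g \<noteq> 0 \<longrightarrow> diff_count B1 g + diff_count B2 g = lam"
  proof (intro allI impI)
    fix g :: 'a assume "g \<noteq> 0"
    then have "diff_count B1 g + diff_count B2 g + diff_count {0} g = lam"
      using d by (simp add: numeral_3_eq_3 lessThan_Suc add_ac)
    then show "diff_count B1 g + diff_count B2 g = lam" by (simp add: dc_zero)
  qed
  have S2: "\<forall>g. g \<noteq> 0 \<longrightarrow> diff_count B2 g + diff_count B1 g = lam" using S by (simp add: add.commute)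
  have U2: "B2 \<union> B1 \<union> {0} = UNIV" using U by auto
  have dj21: "B2 \<inter> B1 = {}" using dj12 by auto
  show ?thesis
    using main_part[OF dj12 dj13 dj23 U ne1 S] main_part[OF dj21 dj23 dj13 U2 ne2 S2] by blast
qed

end
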